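(* There is a polynomial $G_{n,d}(X)$ which is set-multilinear over the variable partition $X=(X_1,\ldots,X_d)$ with each $|X_i|\leq n$, such that: (i) it has a set-multilinear branching program of size $\mathrm{poly}(n,d)$; but (ii) any ordered set-multilinear branching program computing $G_{n,d}$ requires width $n^{\Omega(d)}$.
   Context: A polynomial is set-multilinear with respect to a partition $(X_1,\ldots,X_d)$ if every monomial contains exactly one variable from each $X_i$. An algebraic branching program (ABP) is a layered DAG with a start node and an end node, edges between consecutive layers labelled by linear polynomials, computing the sum over start-to-end paths of the product of edge labels; its size is its number of nodes and its width is the maximum number of nodes in a layer. A (general) set-multilinear ABP is one in which every node computes a polynomial that is set-multilinear with respect to some subcollection of $\{X_1,\ldots,X_d\}$. An ordered set-multilinear ABP is a set-multilinear ABP of depth $d$ for which there is a permutation $\sigma\in S_d$ such that every edge from layer $\ell-1$ to layer $\ell$ is labelled by a linear form in the variables of $X_{\sigma(\ell)}$. *)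

theory Defs
  imports Complex_Main "HOL-Library.Poly_Mapping" "HOL-Combinatorics.Permutations"
begin

text \<open>Multivariate polynomials over a field, in variables indexed by nat:
  a polynomial maps monomials (finitely supported exponent vectors) to coefficients.\<close>
type_synonym 'a mpoly = "(nat \<Rightarrow>\<^sub>0 nat) \<Rightarrow>\<^sub>0 'a"

definition mdeg :: "(nat \<Rightarrow>\<^sub>0 nat) \<Rightarrow> nat" where
  "mdeg m = (\<Sum>x\<in>Poly_Mapping.keys m. Poly_Mapping.lookup m x)"

definition linear_poly :: "'a::zero mpoly \<Rightarrow> bool" where
  "linear_poly p \<longleftrightarrow> (\<forall>m\<in>Poly_Mapping.keys p. mdeg m \<le> 1)"

definition linear_form_in :: "nat set \<Rightarrow> 'a::zero mpoly \<Rightarrow> bool" where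
  "linear_form_in V p \<longleftrightarrow> (\<forall>m\<in>Poly_Mapping.keys p. \<exists>x\<in>V. m = Poly_Mapping.single x 1)"

definition set_multilinear :: "(nat \<Rightarrow> nat set) \<Rightarrow> nat set \<Rightarrow> 'a::zero mpoly \<Rightarrow> bool" where
  "set_multilinear X S p \<longleftrightarrow>
     (\<forall>m\<in>Poly_Mapping.keys p. (\<forall>x\<in>Poly_Mapping.keys m. \<exists>i\<in>S. x \<in> X i) \<and> (\<forall>i\<in>S. (\<Sum>x\<in>X i. Poly_Mapping.lookup m x) = 1))"

definition var_partition :: "nat \<Rightarrow> nat \<Rightarrow> (nat \<Rightarrow> nat set) \<Rightarrow> bool" where
  "var_partition n d X \<longleftrightarrow>
     (\<forall>i<d. finite (X i) \<and> card (X i) \<le> n) \<and> (\<forall>i<d. \<forall>j<d. i \<noteq> j \<longrightarrow> X i \<inter> X j = {})"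

text \<open>Layered ABP: layers 0..depth; layer l has nodes 0..<wd l; lab l u v is the label of the
  edge from node u of layer l to node v of layer l+1 (label 0 = no edge).
  Start node = node 0 of layer 0, end node = node 0 of layer depth.\<close>
type_synonym 'a abp = "nat \<times> (nat \<Rightarrow> nat) \<times> (nat \<Rightarrow> nat \<Rightarrow> nat \<Rightarrow> 'a mpoly)"

definition depth :: "'a abp \<Rightarrow> nat" where "depth A = fst A"
definition wd :: "'a abp \<Rightarrow> nat \<Rightarrow> nat" where "wd A = fst (snd A)"
definition lab :: "'a abp \<Rightarrow> nat \<Rightarrow> nat \<Rightarrow> nat \<Rightarrow> 'a mpoly" where "lab A = snd (snd A)"

fun node_poly :: "'a::comm_semiring_1 abp \<Rightarrow> nat \<Rightarrow> nat \<Rightarrow> 'a mpoly" where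
  "node_poly A 0 v = (if v = 0 then 1 else 0)"
| "node_poly A (Suc l) v = (\<Sum>u<wd A l. node_poly A l u * lab A l u v)"

definition abp_wf :: "'a::comm_semiring_1 abp \<Rightarrow> bool" where
  "abp_wf A \<longleftrightarrow> wd A 0 = 1 \<and> wd A (depth A) = 1 \<and>
     (\<forall>l u v. (depth A \<le> l \<or> wd A l \<le> u \<or> wd A (Suc l) \<le> v) \<longrightarrow> lab A l u v = 0) \<and>
     (\<forall>l u v. linear_poly (lab A l u v))"

definition abp_computes :: "'a::comm_semiring_1 abp \<Rightarrow> 'a mpoly \<Rightarrow> bool" where
  "abp_computes A f \<longleftrightarrow> node_poly A (depth A) 0 = f"

definition abp_size :: "'a abp \<Rightarrow> nat" where
  "abp_size A = (\<Sum>l\<le>depth A. wd A l)"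

definition abp_width :: "'a abp \<Rightarrow> nat" where
  "abp_width A = Max (wd A ` {..depth A})"

definition sm_abp :: "(nat \<Rightarrow> nat set) \<Rightarrow> nat \<Rightarrow> 'a::comm_semiring_1 abp \<Rightarrow> bool" where
  "sm_abp X d A \<longleftrightarrow> abp_wf A \<and>
     (\<forall>l\<le>depth A. \<forall>v<wd A l. \<exists>S\<subseteq>{..<d}. set_multilinear X S (node_poly A l v))"

definition ordered_sm_abp :: "(nat \<Rightarrow> nat set) \<Rightarrow> nat \<Rightarrow> 'a::comm_semiring_1 abp \<Rightarrow> bool" where
  "ordered_sm_abp X d A \<longleftrightarrow> sm_abp X d A \<and> depth A = d \<and>
     (\<exists>\<sigma>. \<sigma> permutes {..<d} \<and> (\<forall>l<d. \<forall>u v. linear_form_in (X (\<sigma> l)) (lab A l u v)))"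

end

theory Submission
  imports Defs "HOL-Library.Nat_Bijection"
begin


lemma rank_bound:
  fixes F :: "'b \<Rightarrow> nat \<Rightarrow> 'a::field" and H :: "nat \<Rightarrow> 'b \<Rightarrow> 'a"
  assumes "finite T" "\<forall>a\<in>T. \<forall>b\<in>T. (\<Sum>w<W. F a w * H w b) = (if a = b then 1 else 0)"
  shows "card T \<le> W"
  using assms
proof (induction W arbitrary: T F)
  case 0
  then have "T = {}" by (metis equals0I one_neq_zero lessThan_0 sum.empty)
  then show ?case by simp
next
  case (Suc W)
  show ?case
  proof (cases "\<forall>a\<in>T. F a W = 0")
    case True
    have "\<forall>a\<in>T. \<forall>b\<in>T. (\<Sum>w<W. F a w * H w b) = (if a = b then 1 else 0)"
      using Suc.prems(2) True by auto
    from Suc.IH[OF Suc.prems(1) this] show ?thesis by simp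
  next
    case False
    then obtain a0 where a0: "a0 \<in> T" "F a0 W \<noteq> 0" by auto
    define F' where "F' a w = F a w - (F a W / F a0 W) * F a0 w" for a w
    have F'W: "F' a W = 0" for a using a0 by (simp add: F'_def)
    have "\<forall>a\<in>T-{a0}. \<forall>b\<in>T-{a0}. (\<Sum>w<W. F' a w * H w b) = (if a = b then 1 else 0)"
    proof (intro ballI)
      fix a b assume ab: "a \<in> T-{a0}" "b \<in> T-{a0}"
      have "(\<Sum>w<W. F' a w * H w b) = (\<Sum>w<Suc W. F' a w * H w b)" by (simp add: F'W)
      also have "\<dots> = (\<Sum>w<Suc W. F a w * H w b) - (F a W / F a0 W) * (\<Sum>w<Suc W. F a0 w * H w b)"
        by (simp add: F'_def algebra_simps sum_subtractf sum_distrib_left)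
      also have "\<dots> = (if a = b then 1 else 0)" using Suc.prems(2) ab a0 by auto
      finally show "(\<Sum>w<W. F' a w * H w b) = (if a = b then 1 else 0)" .
    qed
    from Suc.IH[OF _ this] Suc.prems(1) have "card (T - {a0}) \<le> W" by simp
    then show ?thesis using a0 Suc.prems(1) by (simp add: card_Diff_singleton)
  qed
qed




definition vars_in :: "nat set \<Rightarrow> 'a::zero mpoly \<Rightarrow> bool" where
  "vars_in V p \<longleftrightarrow> (\<forall>m\<in>Poly_Mapping.keys p. Poly_Mapping.keys m \<subseteq> V)"

lemma vars_in_0[simp]: "vars_in V 0" by (simp add: vars_in_def)
lemma vars_in_1[simp]: "vars_in V (1::'a::zero_neq_one mpoly)" by (simp add: vars_in_def)
lemma vars_in_mono: "vars_in V p \<Longrightarrow> V \<subseteq> W \<Longrightarrow> vars_in W p"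
  by (auto simp: vars_in_def)
lemma vars_in_add: "vars_in V p \<Longrightarrow> vars_in V q \<Longrightarrow> vars_in V (p + q)"
  using keys_add[of p q] by (auto simp: vars_in_def)
lemma vars_in_sum: "(\<And>i. i \<in> I \<Longrightarrow> vars_in V (f i)) \<Longrightarrow> vars_in V (sum f I)"
  by (induction I rule: infinite_finite_induct) (auto intro: vars_in_add)
lemma vars_in_mult:
  fixes p q :: "'a::comm_semiring_1 mpoly"
  assumes "vars_in V p" "vars_in W q" shows "vars_in (V \<union> W) (p * q)"
proof -
  have "Poly_Mapping.keys (a + b) \<subseteq> V \<union> W" if "a \<in> Poly_Mapping.keys p" "b \<in> Poly_Mapping.keys q" for a b :: "nat \<Rightarrow>\<^sub>0 nat"
    using keys_add[of a b] assms that by (auto simp: vars_in_def)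
  then show ?thesis using keys_mult[of p q] unfolding vars_in_def by blast
qed
lemma vars_in_linear_form: "linear_form_in V p \<Longrightarrow> vars_in V p"
  by (auto simp: vars_in_def linear_form_in_def)

fun pp :: "'a::comm_semiring_1 abp \<Rightarrow> nat \<Rightarrow> nat \<Rightarrow> nat \<Rightarrow> nat \<Rightarrow> 'a mpoly" where
  "pp A l u 0 v = (if u = v then 1 else 0)"
| "pp A l u (Suc j) v = (\<Sum>w<wd A (l+j). pp A l u j w * lab A (l+j) w v)"

lemma node_zero: "abp_wf A \<Longrightarrow> wd A l \<le> v \<Longrightarrow> node_poly A l v = 0"
  by (cases l) (auto simp: abp_wf_def)

lemma decomp:
  assumes "abp_wf A"
  shows "node_poly A (l+j) v = (\<Sum>u<wd A l. node_poly A l u * pp A l u j v)"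
proof (induction j arbitrary: v)
  case 0
  show ?case
  proof (cases "v < wd A l")
    case True then show ?thesis by (simp add: if_distrib cong: if_cong)
  next
    case False then show ?thesis using node_zero[OF assms, of l v] by (auto intro!: sum.neutral)
  qed
next
  case (Suc j)
  have "node_poly A (l + Suc j) v = (\<Sum>w<wd A (l+j). node_poly A (l+j) w * lab A (l+j) w v)"
    by simp
  also have "\<dots> = (\<Sum>w<wd A (l+j). \<Sum>u<wd A l. node_poly A l u * pp A l u j w * lab A (l+j) w v)"
    by (simp add: Suc sum_distrib_right)
  also have "\<dots> = (\<Sum>u<wd A l. \<Sum>w<wd A (l+j). node_poly A l u * (pp A l u j w * lab A (l+j) w v))"
    by (subst sum.swap) (simp add: mult.assoc)
  also have "\<dots> = (\<Sum>u<wd A l. node_poly A l u * pp A l u (Suc j) v)"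
    by (simp add: sum_distrib_left)
  finally show ?case .
qed

lemma node_vars:
  assumes lf: "\<forall>l<d. \<forall>u v. linear_form_in (X (\<sigma> l)) (lab A l u v)" and "l \<le> d"
  shows "vars_in (\<Union>i<l. X (\<sigma> i)) (node_poly A l v)"
  using assms(2)
proof (induction l arbitrary: v)
  case 0 then show ?case by simp
next
  case (Suc l)
  have "vars_in (\<Union>i<Suc l. X (\<sigma> i)) (node_poly A l u * lab A l u v)" for u
  proof -
    have "vars_in ((\<Union>i<l. X (\<sigma> i)) \<union> X (\<sigma> l)) (node_poly A l u * lab A l u v)"
      using Suc lf by (intro vars_in_mult[OF Suc.IH vars_in_linear_form]) auto
    then show ?thesis by (rule vars_in_mono) (auto simp: lessThan_Suc)
  qed
  then show ?case by (simp add: vars_in_sum)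
qed

lemma pp_vars:
  assumes lf: "\<forall>l<d. \<forall>u v. linear_form_in (X (\<sigma> l)) (lab A l u v)" and "l + j \<le> d"
  shows "vars_in (\<Union>i\<in>{l..<l+j}. X (\<sigma> i)) (pp A l u j v)"
  using assms(2)
proof (induction j arbitrary: v)
  case 0 then show ?case by simp
next
  case (Suc j)
  have "vars_in (\<Union>i\<in>{l..<l+Suc j}. X (\<sigma> i)) (pp A l u j w * lab A (l+j) w v)" for w
  proof -
    have "vars_in ((\<Union>i\<in>{l..<l+j}. X (\<sigma> i)) \<union> X (\<sigma> (l+j))) (pp A l u j w * lab A (l+j) w v)"
      using Suc lf by (intro vars_in_mult[OF Suc.IH vars_in_linear_form]) auto
    moreover have "{l..<l + Suc j} = insert (l+j) {l..<l+j}" by auto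
    ultimately show ?thesis by (metis UN_insert sup_commute)
  qed
  then show ?case by (simp add: vars_in_sum)
qed

lemma lookup_mult_split:
  fixes f g :: "'a::comm_semiring_1 mpoly"
  assumes "vars_in V f" "vars_in W g" "V \<inter> W = {}" "Poly_Mapping.keys r \<subseteq> V" "Poly_Mapping.keys c \<subseteq> W"
  shows "Poly_Mapping.lookup (f * g) (r + c) = Poly_Mapping.lookup f r * Poly_Mapping.lookup g c"
proof -
  have key: "l = r \<and> q = c" if "Poly_Mapping.lookup f l \<noteq> 0" "Poly_Mapping.lookup g q \<noteq> 0" "r + c = l + q" for l q
  proof -
    have kl: "Poly_Mapping.keys l \<subseteq> V" using assms(1) that(1) by (auto simp: vars_in_def in_keys_iff)
    have kq: "Poly_Mapping.keys q \<subseteq> W" using assms(2) that(2) by (auto simp: vars_in_def in_keys_iff)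
    have e: "Poly_Mapping.lookup r x + Poly_Mapping.lookup c x = Poly_Mapping.lookup l x + Poly_Mapping.lookup q x" for x
      using that(3) by (metis lookup_add)
    have "Poly_Mapping.lookup l x = Poly_Mapping.lookup r x \<and> Poly_Mapping.lookup q x = Poly_Mapping.lookup c x" for x
    proof (cases "x \<in> V")
      case True
      then have "x \<notin> W" using assms(3) by auto
      then have "Poly_Mapping.lookup q x = 0" "Poly_Mapping.lookup c x = 0"
        using kq assms(5) by (auto simp: in_keys_iff)
      then show ?thesis using e[of x] by simp
    next
      case False
      then have "Poly_Mapping.lookup l x = 0" "Poly_Mapping.lookup r x = 0"
        using kl assms(4) by (auto simp: in_keys_iff)
      then show ?thesis using e[of x] by simp
    qed
    then show ?thesis by (auto intro: poly_mapping_eqI)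
  qed
  have inner: "Poly_Mapping.lookup f l * (\<Sum>q. Poly_Mapping.lookup g q when r + c = l + q) = (if l = r then Poly_Mapping.lookup f r * Poly_Mapping.lookup g c else 0)" for l
  proof (cases "l = r")
    case True
    then have "(\<Sum>q. Poly_Mapping.lookup g q when r + c = l + q) = (\<Sum>q. if q = c then Poly_Mapping.lookup g q else 0)"
      by (intro Sum_any.cong) (auto simp: when_def)
    then show ?thesis using True by simp
  next
    case False
    have "Poly_Mapping.lookup f l * (\<Sum>q. Poly_Mapping.lookup g q when r + c = l + q) = 0"
    proof (cases "Poly_Mapping.lookup f l = 0")
      case False
      have "\<And>q. (Poly_Mapping.lookup g q when r + c = l + q) = 0"
        using key False \<open>l \<noteq> r\<close> by (auto simp: when_def)
      then show ?thesis by simp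
    qed simp
    then show ?thesis using False by simp
  qed
  show ?thesis unfolding lookup_mult inner by simp
qed




lemma discrete_ivt:
  fixes f :: "nat \<Rightarrow> nat"
  assumes "f 0 = 0" "\<And>l. f (Suc l) \<le> f l + 1"
  shows "j \<le> f D \<Longrightarrow> \<exists>l\<le>D. f l = j"
proof (induction D)
  case 0 then show ?case using assms(1) by auto
next
  case (Suc D)
  show ?case
  proof (cases "j \<le> f D")
    case True then show ?thesis using Suc.IH by (meson le_SucI)
  next
    case False
    then have "j = f (Suc D)" using Suc.prems assms(2)[of D] by linarith
    then show ?thesis by blast
  qed
qed

lemma mod_cancel': "a < (k::nat) \<Longrightarrow> b < k \<Longrightarrow> (a + s) mod k = (b + s) mod k \<Longrightarrow> a = b"
proof -
  have *: "a = b" if "b \<le> a" "a < k" "(a + s) mod k = (b + s) mod k" for a b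
  proof -
    have "k dvd (a + s) - (b + s)" using that mod_eq_dvd_iff_nat[of "b+s" "a+s" k] by simp
    then have "k dvd a - b" by simp
    moreover have "a - b < k" using that by simp
    ultimately have "a - b = 0" using nat_dvd_not_less by (cases "a - b = 0") auto
    then show ?thesis using that by simp
  qed
  assume "a < k" "b < k" "(a + s) mod k = (b + s) mod k"
  then show "a = b" using *[of b a] *[of a b] by (cases "b \<le> a") auto
qed

lemma card_filter_sum: "finite A \<Longrightarrow> card {x\<in>A. P x} = (\<Sum>x\<in>A. if P x then 1 else (0::nat))"
  by (simp add: sum.inter_filter[symmetric])

lemma shift_bij: "0 < (k::nat) \<Longrightarrow> (\<lambda>s. (i + s) mod k) ` {..<k} = {..<k} \<and> inj_on (\<lambda>s. (i + s) mod k) {..<k}"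
proof -
  assume k: "0 < k"
  have inj: "inj_on (\<lambda>s. (i + s) mod k) {..<k}"
    by (rule inj_onI) (use mod_cancel' in \<open>auto simp: add.commute\<close>)
  moreover have "(\<lambda>s. (i + s) mod k) ` {..<k} \<subseteq> {..<k}" using k by auto
  ultimately show ?thesis by (simp add: endo_inj_surj)
qed

lemma sq_ineq: "((p::nat) + q) * (p + q) \<le> 2 * (p * p + q * q)"
proof -
  have "(int p - int q) * (int p - int q) \<ge> 0" by simp
  then have "int ((p + q) * (p + q)) \<le> int (2 * (p * p + q * q))" by (simp add: algebra_simps)
  then show ?thesis by linarith
qed

lemma cross_exists:
  fixes k :: nat and P :: "nat set"
  assumes k: "0 < k" and cP: "card (P \<inter> {..<2*k}) = k"
  shows "\<exists>s<k. k \<le> 2 * card {i\<in>{..<k}. (i \<in> P) \<noteq> (k + (i + s) mod k \<in> P)}"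
proof (rule ccontr)
  assume "\<not> ?thesis"
  then have lt: "\<And>s. s < k \<Longrightarrow> 2 * card {i\<in>{..<k}. (i \<in> P) \<noteq> (k + (i + s) mod k \<in> P)} + 1 \<le> k"
    by force
  define p where "p = card (P \<inter> {..<k})"
  define q where "q = card {j\<in>{..<k}. k + j \<in> P}"
  have "P \<inter> {..<2*k} = (P \<inter> {..<k}) \<union> (\<lambda>j. k + j) ` {j\<in>{..<k}. k + j \<in> P}"
    by (auto simp: image_iff) (metis add_diff_inverse_nat add_less_imp_less_left mult_2 not_less)
  moreover have "(P \<inter> {..<k}) \<inter> (\<lambda>j. k + j) ` {j\<in>{..<k}. k + j \<in> P} = {}" by auto
  moreover have "card ((\<lambda>j. k + j) ` {j\<in>{..<k}. k + j \<in> P}) = q"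
    unfolding q_def by (rule card_image) (simp add: inj_on_def)
  ultimately have pq: "p + q = k" using cP unfolding p_def by (simp add: card_Un_disjoint)
  have inner: "(\<Sum>s<k. if (i \<in> P) \<noteq> (k + (i + s) mod k \<in> P) then 1 else (0::nat)) = (if i \<in> P then p else q)"
    if i: "i < k" for i
  proof -
    obtain im: "(\<lambda>s. (i + s) mod k) ` {..<k} = {..<k}" and inj: "inj_on (\<lambda>s. (i + s) mod k) {..<k}"
      using shift_bij[OF k] by blast
    have "(\<Sum>s<k. if (i \<in> P) \<noteq> (k + (i + s) mod k \<in> P) then 1 else (0::nat)) =
          (\<Sum>j\<in>(\<lambda>s. (i + s) mod k) ` {..<k}. if (i \<in> P) \<noteq> (k + j \<in> P) then 1 else 0)"
      by (simp add: sum.reindex[OF inj])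
    also have "\<dots> = (\<Sum>j<k. if (i \<in> P) \<noteq> (k + j \<in> P) then 1 else 0)" by (simp add: im)
    also have "\<dots> = card {j\<in>{..<k}. (i \<in> P) \<noteq> (k + j \<in> P)}"
      using card_filter_sum[of "{..<k}" "\<lambda>j. (i \<in> P) \<noteq> (k + j \<in> P)"] by simp
    also have "\<dots> = (if i \<in> P then k - q else q)"
    proof (cases "i \<in> P")
      case True
      have "{j\<in>{..<k}. k + j \<notin> P} = {..<k} - {j\<in>{..<k}. k + j \<in> P}" by auto
      moreover have "card ({..<k} - {j\<in>{..<k}. k + j \<in> P}) = k - q"
        unfolding q_def by (subst card_Diff_subset) auto
      ultimately have "card {j\<in>{..<k}. k + j \<notin> P} = k - q" by simp
      then show ?thesis using True by simp
    qed (simp add: q_def)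
    finally show ?thesis using pq by auto
  qed
  have "(\<Sum>s<k. card {i\<in>{..<k}. (i \<in> P) \<noteq> (k + (i + s) mod k \<in> P)}) =
        (\<Sum>s<k. \<Sum>i<k. if (i \<in> P) \<noteq> (k + (i + s) mod k \<in> P) then 1 else (0::nat))"
    by (intro sum.cong refl card_filter_sum) simp
  also have "\<dots> = (\<Sum>i<k. \<Sum>s<k. if (i \<in> P) \<noteq> (k + (i + s) mod k \<in> P) then 1 else (0::nat))"
    by (rule sum.swap)
  also have "\<dots> = (\<Sum>i<k. if i \<in> P then p else q)" proof (intro sum.cong refl)
    fix i assume "i \<in> {..<k}"
    then show "(\<Sum>s<k. if (i \<in> P) \<noteq> (k + (i + s) mod k \<in> P) then 1 else (0::nat)) = (if i \<in> P then p else q)"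
      using inner[of i] by simp
  qed
  also have "\<dots> = card ({..<k} \<inter> {x. x \<in> P}) * p + card ({..<k} \<inter> - {x. x \<in> P}) * q"
    by (simp add: sum.If_cases)
  also have "\<dots> = p * p + q * q"
  proof -
    have e1: "{..<k} \<inter> {x. x \<in> P} = P \<inter> {..<k}" by auto
    have e2: "{..<k} \<inter> - {x. x \<in> P} = {..<k} - (P \<inter> {..<k})" by auto
    have "card ({..<k} - (P \<inter> {..<k})) = k - p" unfolding p_def by (subst card_Diff_subset) auto
    then show ?thesis using e1 e2 pq unfolding p_def by (simp add: diff_eq_eq[symmetric]; linarith)
  qed
  finally have S: "(\<Sum>s<k. card {i\<in>{..<k}. (i \<in> P) \<noteq> (k + (i + s) mod k \<in> P)}) = p * p + q * q" .
  define c where "c s = card {i\<in>{..<k}. (i \<in> P) \<noteq> (k + (i + s) mod k \<in> P)}" for s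
  have S': "(\<Sum>s<k. c s) = p*p + q*q" using S unfolding c_def .
  have "(\<Sum>s<k. 2 * c s + 1) \<le> (\<Sum>s<k. k)"
  proof (rule sum_mono)
    fix s assume s: "s \<in> {..<k}"
    show "2 * c s + 1 \<le> k" unfolding c_def by (rule lt) (use s in simp)
  qed
  moreover have "(\<Sum>s<k. 2 * c s + 1) = 2 * (\<Sum>s<k. c s) + k"
    by (simp only: sum.distrib sum_distrib_left[symmetric]) simp
  ultimately have "2 * (p * p + q * q) + k \<le> k * k" using S' by simp
  moreover have "k * k \<le> 2 * (p * p + q * q)" using sq_ineq[of p q] pq by simp
  ultimately show False using k by linarith
qed




definition vr :: "nat \<Rightarrow> nat \<Rightarrow> nat" where "vr i t = prod_encode (i, t)"
lemma vr_eq[simp]: "vr a b = vr c e \<longleftrightarrow> a = c \<and> b = e"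
  by (auto simp: vr_def prod_encode_eq)

definition Xp :: "nat \<Rightarrow> nat \<Rightarrow> nat set" where "Xp n i = (\<lambda>t. vr i t) ` {..<n}"
lemma vr_in_Xp[simp]: "vr j t \<in> Xp n i \<longleftrightarrow> j = i \<and> t < n"
  by (auto simp: Xp_def)
lemma Xp_disj: "i \<noteq> j \<Longrightarrow> Xp n i \<inter> Xp n j = {}"
  by (auto simp: Xp_def)
lemma card_Xp: "card (Xp n i) = n"
  unfolding Xp_def by (subst card_image) (auto simp: inj_on_def)
lemma finite_Xp[simp]: "finite (Xp n i)" by (simp add: Xp_def)

definition xv :: "nat \<Rightarrow> nat \<Rightarrow> nat \<Rightarrow>\<^sub>0 nat" where "xv i t = Poly_Mapping.single (vr i t) 1"
definition XX :: "nat \<Rightarrow> nat \<Rightarrow> 'a::comm_semiring_1 mpoly" where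
  "XX i t = Poly_Mapping.single (xv i t) 1"

lemma lookup_xv: "Poly_Mapping.lookup (xv i t) (vr j e) = (if i = j \<and> t = e then 1 else 0)"
  by (auto simp: xv_def lookup_single when_def)

context fixes n d :: nat begin

definition "kk = (if 2 \<le> n then d div 3 else 0)"
definition "BB = max 1 kk"
definition "sel s j = (if j < 3*kk \<and> j = 2*kk + s then 1 else (0::nat))"
definition "pii s l = (if l < 2*kk then (if even l then l div 2 else kk + (l div 2 + s) mod kk) else l)"
definition "wdf l = (if l = 0 \<or> l = d then 1 else BB*n)"
definition "hub l s = (if l = 0 \<or> l = d then 0 else s*n)"
definition core :: "nat \<Rightarrow> nat \<Rightarrow> nat \<Rightarrow> 'a::comm_semiring_1 mpoly" where
  "core l u v = (let s = (if l = 0 then v div n else u div n) in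
     if l < 2*kk then
       (if even l then (if u = hub l s \<and> v div n = s then XX (l div 2) (v mod n) else 0)
        else (if v = hub (Suc l) s then XX (kk + (l div 2 + s) mod kk) (u mod n) else 0))
     else (if u = hub l s \<and> v = hub (Suc l) s then XX l (sel s l) else 0))"
definition labf :: "nat \<Rightarrow> nat \<Rightarrow> nat \<Rightarrow> 'a::comm_semiring_1 mpoly" where
  "labf l u v = (if l < d \<and> u < wdf l \<and> v < wdf (Suc l) then core l u v else 0)"
definition ABPc :: "'a::comm_semiring_1 abp" where "ABPc = (d, wdf, labf)"

definition Hm :: "nat \<Rightarrow> (nat \<Rightarrow> nat) \<Rightarrow> nat \<Rightarrow> nat \<Rightarrow>\<^sub>0 nat" where
  "Hm s \<tau> i = (\<Sum>j<i. xv j (\<tau> j) + xv (kk + (j + s) mod kk) (\<tau> j))"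
definition Tl :: "nat \<Rightarrow> nat \<Rightarrow> nat \<Rightarrow>\<^sub>0 nat" where
  "Tl s l = (\<Sum>j\<in>{2*kk..<l}. xv j (sel s j))"
definition "Full s \<tau> = Hm s \<tau> kk + Tl s d"
definition Gexp :: "'a::comm_semiring_1 mpoly" where
  "Gexp = (\<Sum>s<BB. \<Sum>\<tau>\<in>Pi\<^sub>E {..<kk} (\<lambda>_. {..<n}). Poly_Mapping.single (Full s \<tau>) 1)"

lemma depth_ABPc[simp]: "depth ABPc = d" by (simp add: ABPc_def depth_def)
lemma wd_ABPc[simp]: "wd ABPc = wdf" by (simp add: ABPc_def wd_def)
lemma lab_ABPc[simp]: "lab ABPc = labf" by (simp add: ABPc_def lab_def)

lemma kk_facts: "0 < kk \<Longrightarrow> 2 \<le> n \<and> 3 * kk \<le> d"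
  by (auto simp: kk_def split: if_splits)

lemma blk_sum: "sum h {a..<a+m} = (\<Sum>t<(m::nat). h (a+t))"
  by (induction m) auto

lemma sum_grid: "(\<Sum>u<(B::nat)*(m::nat). h u) = (\<Sum>s<B. \<Sum>t<m. h (s*m + t))"
  using sum.nat_group[of h m B] by (simp add: blk_sum)

lemma grid_lt: "s < (B::nat) \<Longrightarrow> t < m \<Longrightarrow> s*m+t < B*m"
proof -
  assume a: "s < B" "t < m"
  have "s*m + t < (s+1)*m" using a by simp
  also have "\<dots> \<le> B*m" using a by (intro mult_right_mono) auto
  finally show ?thesis .
qed

lemma hub_lt: "1 \<le> n \<Longrightarrow> s < BB \<Longrightarrow> hub l s < wdf l"
  by (auto simp: hub_def wdf_def)

lemma BB_pos: "0 < BB" by (simp add: BB_def)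

lemma lab_even:
  assumes "1 \<le> n" "l < 2*kk" "even l" "u < wdf l" "s < BB" "t < n"
  shows "labf l u (s*n+t) = (if u = hub l s then XX (l div 2) t else 0)"
proof -
  have kf: "2 \<le> n" "3*kk \<le> d" using kk_facts assms(2) by auto
  have sl: "Suc l < d" "l < d" using kf assms(2) by auto
  have w: "wdf (Suc l) = BB*n" using sl by (simp add: wdf_def)
  have v: "s*n+t < BB*n" by (rule grid_lt) (use assms in auto)
  have dv: "(s*n+t) div n = s" "(s*n+t) mod n = t" using assms(6) by auto
  have "labf l u (s*n+t) = core l u (s*n+t)" using sl v w assms(4) by (simp add: labf_def)
  also have "\<dots> = (let s' = (if l = 0 then s else u div n) in
       if u = hub l s' \<and> s = s' then XX (l div 2) t else 0)"
    unfolding core_def Let_def dv using assms(2,3) by simp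
  also have "\<dots> = (if u = hub l s then XX (l div 2) t else 0)"
  proof (cases "l = 0")
    case True
    then show ?thesis by (simp add: Let_def)
  next
    case False
    have "u = hub l (u div n) \<and> s = u div n \<longleftrightarrow> u = hub l s"
      using False sl assms(1) by (auto simp: hub_def)
    then show ?thesis using False by (simp add: Let_def)
  qed
  finally show ?thesis .
qed

lemma lab_odd:
  assumes "1 \<le> n" "l < 2*kk" "odd l" "u < BB*n" "s < BB"
  shows "labf l u (s*n) = (if u div n = s then XX (kk + (l div 2 + s) mod kk) (u mod n) else 0)"
proof -
  have kf: "2 \<le> n" "3*kk \<le> d" using kk_facts assms(2) by auto
  have l0: "l \<noteq> 0" using assms(3) by (metis even_zero)
  have sl: "Suc l < d" "l < d" "l \<noteq> 0" using kf assms(2) l0 by auto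
  have w: "wdf (Suc l) = BB*n" "wdf l = BB*n" using sl by (auto simp: wdf_def)
  have v: "s*n < BB*n" using assms(1,5) by simp
  have e: "s * n = u div n * n \<longleftrightarrow> u div n = s" using assms(1) by auto
  have h: "hub (Suc l) (u div n) = u div n * n" using sl by (simp add: hub_def)
  have "labf l u (s*n) = core l u (s*n)" using sl v w assms(4) by (simp add: labf_def)
  also have "\<dots> = (if s*n = hub (Suc l) (u div n) then XX (kk + (l div 2 + u div n) mod kk) (u mod n) else 0)"
    unfolding core_def Let_def using assms(2,3) sl by simp
  also have "\<dots> = (if u div n = s then XX (kk + (l div 2 + s) mod kk) (u mod n) else 0)"
    unfolding h e by auto
  finally show ?thesis .
qed

lemma lab_tail:
  assumes "1 \<le> n" "2*kk \<le> l" "Suc l < d" "u < wdf l" "s < BB"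
  shows "labf l u (s*n) = (if u = hub l s then XX l (sel s l) else 0)"
proof -
  have sl: "l < d" using assms by auto
  have w: "wdf (Suc l) = BB*n" using assms(3) by (auto simp: wdf_def)
  have v: "s*n < BB*n" using assms(1,5) by simp
  have dvs: "s*n div n = s" using assms(1) by simp
  have "labf l u (s*n) = core l u (s*n)" using sl v w assms(4) by (simp add: labf_def)
  also have "\<dots> = (let s' = (if l = 0 then s else u div n) in
       if u = hub l s' \<and> s*n = hub (Suc l) s' then XX l (sel s' l) else 0)"
    unfolding core_def Let_def using assms(1,2) by (cases "l = 0") (simp_all add: dvs, auto simp: hub_def)
  also have "\<dots> = (if u = hub l s then XX l (sel s l) else 0)"
  proof (cases "l = 0")
    case True
    then show ?thesis using assms(3) by (simp add: Let_def hub_def)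
  next
    case False
    have "u = hub l (u div n) \<and> s*n = hub (Suc l) (u div n) \<longleftrightarrow> u = hub l s"
      using False sl assms(1,3) by (auto simp: hub_def)
    moreover have "hub l s = s * n" using False sl by (simp add: hub_def)
    ultimately show ?thesis using False dvs by (auto simp: Let_def)
  qed
  finally show ?thesis .
qed

lemma last_sum:
  assumes "1 \<le> n" "2*kk \<le> l" "Suc l = d"
  shows "(\<Sum>u<wdf l. f u * labf l u 0) = (\<Sum>s<BB. f (hub l s) * (XX l (sel s l) :: 'a::comm_semiring_1 mpoly))"
proof (cases "l = 0")
  case True
  then have k0: "kk = 0" "BB = 1" using assms by (auto simp: BB_def)
  have "labf 0 0 0 = (XX 0 (sel 0 0) :: 'a mpoly)"
    using assms True k0 by (simp add: wdf_def labf_def core_def hub_def Let_def)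
  then show ?thesis using True k0 by (simp add: wdf_def hub_def)
next
  case False
  have w: "wdf l = BB*n" using False assms by (simp add: wdf_def)
  have "(\<Sum>u<BB*n. f u * labf l u 0) = (\<Sum>s<BB. \<Sum>t<n. f (s*n+t) * labf l (s*n+t) 0)"
    by (rule sum_grid)
  also have "\<dots> = (\<Sum>s<BB. \<Sum>t<n. if t = 0 then f (hub l s) * XX l (sel s l) else 0)"
  proof (intro sum.cong refl)
    fix s t assume st: "s \<in> {..<BB}" "t \<in> {..<n}"
    have lt: "s*n+t < BB*n" by (rule grid_lt) (use st in auto)
    have dv: "(s*n+t) div n = s" using st by auto
    have h1: "hub l s = s*n" "hub (Suc l) s = 0" using False assms by (auto simp: hub_def)
    have "labf l (s*n+t) 0 = core l (s*n+t) 0" using lt w assms by (simp add: labf_def wdf_def)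
    also have "\<dots> = (if s*n+t = hub l s then XX l (sel s l) else 0)"
      unfolding core_def Let_def dv using False assms(2) h1 by simp
    also have "\<dots> = (if t = 0 then XX l (sel s l) else 0)" using h1 by simp
    finally have *: "labf l (s*n+t) 0 = (if t = 0 then XX l (sel s l) else (0::'a mpoly))" .
    show "f (s*n+t) * labf l (s*n+t) 0 = (if t = 0 then f (hub l s) * XX l (sel s l) else 0)"
      using h1 * by (cases "t = 0") auto
  qed
  also have "\<dots> = (\<Sum>s<BB. f (hub l s) * XX l (sel s l))"
    using assms(1) by simp
  finally show ?thesis using w by simp
qed

lemma Hm_upd: "Hm s (g(i:=y)) (Suc i) = Hm s g i + xv i y + xv (kk + (i + s) mod kk) y"
proof -
  have "Hm s (g(i:=y)) i = Hm s g i" unfolding Hm_def by (intro sum.cong) auto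
  then show ?thesis by (simp add: Hm_def add.assoc)
qed

lemma sum_PiE_Suc:
  "(\<Sum>\<tau>\<in>Pi\<^sub>E {..<Suc i} (\<lambda>_. A). h \<tau>) = (\<Sum>y\<in>A. \<Sum>g\<in>Pi\<^sub>E {..<i} (\<lambda>_. A). h (g(i:=y)))"
proof -
  have "Pi\<^sub>E {..<Suc i} (\<lambda>_. A) = (\<lambda>(y, g). g(i := y)) ` (A \<times> Pi\<^sub>E {..<i} (\<lambda>_. A))"
    by (simp add: lessThan_Suc PiE_insert_eq)
  moreover have "inj_on (\<lambda>(y, g). g(i := y)) (A \<times> Pi\<^sub>E {..<i} (\<lambda>_. A))"
    using inj_combinator[of i "{..<i}" "\<lambda>_. A"] by simp
  ultimately have "(\<Sum>\<tau>\<in>Pi\<^sub>E {..<Suc i} (\<lambda>_. A). h \<tau>) =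
     (\<Sum>x\<in>A \<times> Pi\<^sub>E {..<i} (\<lambda>_. A). h (case x of (y, g) \<Rightarrow> g(i := y)))"
    by (simp add: sum.reindex)
  also have "\<dots> = (\<Sum>(y,g)\<in>A \<times> Pi\<^sub>E {..<i} (\<lambda>_. A). h (g(i := y)))"
    by (simp add: prod.case_distrib)
  also have "\<dots> = (\<Sum>y\<in>A. \<Sum>g\<in>Pi\<^sub>E {..<i} (\<lambda>_. A). h (g(i:=y)))"
    by (simp add: sum.cartesian_product)
  finally show ?thesis .
qed

lemma node_B_of_A:
  assumes "1 \<le> n" "i < kk" "s < BB" "t < n"
    and A: "node_poly (ABPc :: 'a::comm_semiring_1 abp) (2*i) (hub (2*i) s) =
           (\<Sum>\<tau>\<in>Pi\<^sub>E {..<i} (\<lambda>_. {..<n}). Poly_Mapping.single (Hm s \<tau> i) 1)"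
  shows "node_poly (ABPc :: 'a abp) (Suc (2*i)) (s*n+t) =
           (\<Sum>\<tau>\<in>Pi\<^sub>E {..<i} (\<lambda>_. {..<n}). Poly_Mapping.single (Hm s \<tau> i + xv i t) 1)"
proof -
  have "node_poly (ABPc :: 'a abp) (Suc (2*i)) (s*n+t) =
        (\<Sum>u<wdf (2*i). node_poly (ABPc :: 'a abp) (2*i) u * labf (2*i) u (s*n+t))" by simp
  also have "\<dots> = (\<Sum>u<wdf (2*i). if u = hub (2*i) s then node_poly (ABPc :: 'a abp) (2*i) u * XX i t else 0)"
    using assms(1-4) by (intro sum.cong refl) (simp add: lab_even)
  also have "\<dots> = node_poly (ABPc :: 'a abp) (2*i) (hub (2*i) s) * XX i t"
    using hub_lt[OF assms(1,3)] by simp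
  also have "\<dots> = (\<Sum>\<tau>\<in>Pi\<^sub>E {..<i} (\<lambda>_. {..<n}). Poly_Mapping.single (Hm s \<tau> i + xv i t) 1)"
    by (simp add: A sum_distrib_right XX_def mult_single)
  finally show ?thesis .
qed

lemma node_A:
  assumes "1 \<le> n"
  shows "i \<le> kk \<Longrightarrow> s < BB \<Longrightarrow> node_poly (ABPc :: 'a::comm_semiring_1 abp) (2*i) (hub (2*i) s) =
           (\<Sum>\<tau>\<in>Pi\<^sub>E {..<i} (\<lambda>_. {..<n}). Poly_Mapping.single (Hm s \<tau> i) 1)"
proof (induction i arbitrary: s)
  case 0
  then show ?case by (simp add: hub_def Hm_def)
next
  case (Suc i)
  have ik: "i < kk" using Suc by simp
  have kf: "2 \<le> n" "3*kk \<le> d" using kk_facts ik by auto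
  have hb: "hub (2 * Suc i) s = s*n" using kf Suc.prems by (auto simp: hub_def)
  have w: "wdf (Suc (2*i)) = BB*n" using kf ik by (auto simp: wdf_def)
  let ?R = "kk + (i + s) mod kk"
  have "node_poly (ABPc :: 'a abp) (2 * Suc i) (hub (2 * Suc i) s) =
        node_poly (ABPc :: 'a abp) (Suc (Suc (2 * i))) (s*n)"
    unfolding hb by (simp del: node_poly.simps)
  also have "\<dots> = (\<Sum>u<BB*n. node_poly (ABPc :: 'a abp) (Suc (2*i)) u * labf (Suc (2*i)) u (s*n))"
    by (simp only: node_poly.simps wd_ABPc lab_ABPc w)
  also have "\<dots> = (\<Sum>u<BB*n. if u div n = s then node_poly (ABPc :: 'a abp) (Suc (2*i)) u * XX ?R (u mod n) else 0)"
    using assms ik Suc.prems by (intro sum.cong refl) (simp add: lab_odd)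
  also have "\<dots> = (\<Sum>s'<BB. \<Sum>t<n. if s' = s then node_poly (ABPc :: 'a abp) (Suc (2*i)) (s'*n+t) * XX ?R t else 0)"
    by (subst sum_grid) (intro sum.cong refl, simp)
  also have "\<dots> = (\<Sum>t<n. node_poly (ABPc :: 'a abp) (Suc (2*i)) (s*n+t) * XX ?R t)"
    using Suc.prems by (subst sum.swap) (simp del: node_poly.simps)
  also have "\<dots> = (\<Sum>t<n. \<Sum>\<tau>\<in>Pi\<^sub>E {..<i} (\<lambda>_. {..<n}). Poly_Mapping.single (Hm s \<tau> i + xv i t + xv ?R t) 1)"
  proof (intro sum.cong refl)
    fix t assume t: "t \<in> {..<n}"
    have "node_poly (ABPc :: 'a abp) (Suc (2*i)) (s*n+t) =
           (\<Sum>\<tau>\<in>Pi\<^sub>E {..<i} (\<lambda>_. {..<n}). Poly_Mapping.single (Hm s \<tau> i + xv i t) 1)"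
      using node_B_of_A[OF assms ik Suc.prems(2) _ Suc.IH] t Suc.prems by simp
    then show "node_poly (ABPc :: 'a abp) (Suc (2*i)) (s*n+t) * XX ?R t =
       (\<Sum>\<tau>\<in>Pi\<^sub>E {..<i} (\<lambda>_. {..<n}). Poly_Mapping.single (Hm s \<tau> i + xv i t + xv ?R t) 1)"
      by (simp add: sum_distrib_right XX_def mult_single)
  qed
  also have "\<dots> = (\<Sum>\<tau>\<in>Pi\<^sub>E {..<Suc i} (\<lambda>_. {..<n}). Poly_Mapping.single (Hm s \<tau> (Suc i)) 1)"
    by (simp add: sum_PiE_Suc Hm_upd)
  finally show ?case by simp
qed

lemma Tl_Suc: "2*kk \<le> l \<Longrightarrow> Tl s (Suc l) = Tl s l + xv l (sel s l)"
  by (simp add: Tl_def sum.atLeastLessThan_Suc)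

lemma node_C:
  assumes "1 \<le> n"
  shows "2*kk + j < d \<Longrightarrow> s < BB \<Longrightarrow> node_poly (ABPc :: 'a::comm_semiring_1 abp) (2*kk + j) (hub (2*kk + j) s) =
           (\<Sum>\<tau>\<in>Pi\<^sub>E {..<kk} (\<lambda>_. {..<n}). Poly_Mapping.single (Hm s \<tau> kk + Tl s (2*kk+j)) 1)"
proof (induction j arbitrary: s)
  case 0
  then show ?case using node_A[OF assms, of kk s] by (simp add: Tl_def)
next
  case (Suc j)
  let ?l = "2*kk + j"
  have hb: "hub (Suc ?l) s = s*n" using Suc.prems by (simp add: hub_def)
  have "node_poly (ABPc :: 'a abp) (2*kk + Suc j) (hub (2*kk + Suc j) s) =
        node_poly (ABPc :: 'a abp) (Suc ?l) (s*n)"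
    using hb by (simp del: node_poly.simps)
  also have "\<dots> = (\<Sum>u<wdf ?l. node_poly (ABPc :: 'a abp) ?l u * labf ?l u (s*n))"
    by (simp only: node_poly.simps wd_ABPc lab_ABPc)
  also have "\<dots> = (\<Sum>u<wdf ?l. if u = hub ?l s then node_poly (ABPc :: 'a abp) ?l u * XX ?l (sel s ?l) else 0)"
    using assms Suc.prems by (intro sum.cong refl) (simp add: lab_tail del: node_poly.simps)
  also have "\<dots> = node_poly (ABPc :: 'a abp) ?l (hub ?l s) * XX ?l (sel s ?l)"
    using hub_lt[OF assms Suc.prems(2)] by (simp del: node_poly.simps)
  also have "\<dots> = (\<Sum>\<tau>\<in>Pi\<^sub>E {..<kk} (\<lambda>_. {..<n}). Poly_Mapping.single (Hm s \<tau> kk + Tl s (Suc ?l)) 1)"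
    using Suc.IH[of s] Suc.prems by (simp add: sum_distrib_right XX_def mult_single Tl_Suc add.assoc del: node_poly.simps)
  finally show ?case by simp
qed

lemma node_end:
  assumes "1 \<le> n"
  shows "node_poly (ABPc :: 'a::comm_semiring_1 abp) d 0 = Gexp"
proof (cases d)
  case 0
  have k0: "kk = 0" unfolding kk_def using 0 by simp
  then have b1: "BB = 1" unfolding BB_def by simp
  show ?thesis unfolding Gexp_def Full_def Hm_def Tl_def using 0 k0 b1 by simp
next
  case (Suc l)
  have l2: "2*kk \<le> l" using kk_facts Suc by (cases "kk = 0") auto
  obtain j where j: "l = 2*kk + j" using l2 le_Suc_ex by blast
  have lt: "2*kk + j < d" using j Suc by linarith
  have "node_poly (ABPc :: 'a abp) d 0 = node_poly (ABPc :: 'a abp) (Suc l) 0"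
    by (rule arg_cong[where f = "\<lambda>x. node_poly (ABPc :: 'a abp) x 0"]) (rule Suc)
  also have "\<dots> = (\<Sum>u<wdf l. node_poly (ABPc :: 'a abp) l u * labf l u 0)"
    by (simp only: node_poly.simps wd_ABPc lab_ABPc)
  also have "\<dots> = (\<Sum>s<BB. node_poly (ABPc :: 'a abp) l (hub l s) * XX l (sel s l))"
    by (rule last_sum[OF assms l2 Suc[symmetric]])
  also have "\<dots> = (\<Sum>s<BB. \<Sum>\<tau>\<in>Pi\<^sub>E {..<kk} (\<lambda>_. {..<n}). Poly_Mapping.single (Full s \<tau>) 1)"
  proof (intro sum.cong refl)
    fix s assume s: "s \<in> {..<BB}"
    have "node_poly (ABPc :: 'a abp) l (hub l s) =
           (\<Sum>\<tau>\<in>Pi\<^sub>E {..<kk} (\<lambda>_. {..<n}). Poly_Mapping.single (Hm s \<tau> kk + Tl s l) 1)"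
      using node_C[OF assms lt, of s] s unfolding j by (simp del: node_poly.simps)
    moreover have "Full s \<tau> = Hm s \<tau> kk + Tl s l + xv l (sel s l)" for \<tau>
    proof -
      have "Tl s d = Tl s (Suc l)" by (rule arg_cong[OF Suc])
      then show ?thesis unfolding Full_def using Tl_Suc[OF l2] by (simp add: add.assoc)
    qed
    ultimately show "node_poly (ABPc :: 'a abp) l (hub l s) * XX l (sel s l) =
          (\<Sum>\<tau>\<in>Pi\<^sub>E {..<kk} (\<lambda>_. {..<n}). Poly_Mapping.single (Full s \<tau>) 1)"
      by (simp add: sum_distrib_right XX_def mult_single del: node_poly.simps)
  qed
  finally show ?thesis by (simp add: Gexp_def)
qed

lemma mod_cancel: "a < (k::nat) \<Longrightarrow> b < k \<Longrightarrow> (a + s) mod k = (b + s) mod k \<Longrightarrow> a = b"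
proof -
  have *: "a = b" if "b \<le> a" "a < k" "(a + s) mod k = (b + s) mod k" for a b
  proof -
    have "k dvd (a + s) - (b + s)" using that mod_eq_dvd_iff_nat[of "b+s" "a+s" k] by simp
    then have "k dvd a - b" by simp
    moreover have "a - b < k" using that by simp
    ultimately have "a - b = 0" using nat_dvd_not_less by (cases "a - b = 0") auto
    then show ?thesis using that by simp
  qed
  assume "a < k" "b < k" "(a + s) mod k = (b + s) mod k"
  then show "a = b" using *[of b a] *[of a b] by (cases "b \<le> a") auto
qed

lemma pii_lt: "l < d \<Longrightarrow> pii s l < d"
proof -
  assume l: "l < d"
  show ?thesis
  proof (cases "l < 2*kk")
    case True
    then have k: "0 < kk" "3*kk \<le> d" using kk_facts by auto
    have "l div 2 < d" using True k by auto
    moreover have "(l div 2 + s) mod kk < kk" using k by simp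
    then have "kk + (l div 2 + s) mod kk < d" using k by linarith
    ultimately show ?thesis using True k by (auto simp: pii_def)
  qed (use l in \<open>simp add: pii_def\<close>)
qed

lemma pii_inj: "inj_on (pii s) {..<d}"
proof (rule inj_onI)
  fix a b assume ab: "a \<in> {..<d}" "b \<in> {..<d}" "pii s a = pii s b"
  have r1: "pii s l < 2*kk" if "l < 2*kk" for l
  proof -
    have "l div 2 < kk" using that by auto
    moreover have "kk + (l div 2 + s) mod kk < 2*kk" using that by simp
    ultimately show ?thesis using that by (auto simp: pii_def)
  qed
  have r2: "pii s l = l" if "\<not> l < 2*kk" for l using that by (simp add: pii_def)
  show "a = b"
  proof (cases "a < 2*kk")
    case True note a = this
    show ?thesis
    proof (cases "b < 2*kk")
      case True note b = this
      have da: "a div 2 < kk" "b div 2 < kk" using a b by auto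
      have lt: "kk + (x div 2 + s) mod kk \<ge> kk" for x by simp
      show ?thesis
      proof (cases "even a"; cases "even b")
        assume "even a" "even b"
        then show ?thesis using ab(3) a b by (simp add: pii_def) (metis dvd_mult_div_cancel)
      next
        assume "even a" "odd b"
        then show ?thesis using ab(3) a b da by (simp add: pii_def)
      next
        assume "odd a" "even b"
        then show ?thesis using ab(3) a b da by (simp add: pii_def)
      next
        assume oa: "odd a" and ob: "odd b"
        then have "(a div 2 + s) mod kk = (b div 2 + s) mod kk" using ab(3) a b by (simp add: pii_def)
        then have "a div 2 = b div 2" using mod_cancel da by blast
        then show ?thesis using oa ob by (metis odd_two_times_div_two_succ)
      qed
    next
      case False
      then show ?thesis using ab(3) r1[OF a] r2[of b] by simp
    qed
  next
    case False note a = this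
    show ?thesis
    proof (cases "b < 2*kk")
      case True
      then show ?thesis using ab(3) r1[of b] r2[OF a] a by simp
    next
      case False
      then show ?thesis using ab(3) r2 a by simp
    qed
  qed
qed

lemma pii_surj: "pii s ` {..<d} = {..<d}"
proof -
  have "pii s ` {..<d} \<subseteq> {..<d}" using pii_lt by auto
  then show ?thesis using pii_inj[of s] by (simp add: endo_inj_surj)
qed

lemma keys_XX[simp]: "Poly_Mapping.keys (XX i t :: 'a::comm_semiring_1 mpoly) = {xv i t}"
  by (simp add: XX_def)

lemma XX_nz[simp]: "(XX i t :: 'a::comm_semiring_1 mpoly) \<noteq> 0"
  by (metis keys_XX keys_zero empty_iff insertI1)

lemma lab_char:
  assumes "1 \<le> n" "labf l u v \<noteq> (0::'a::comm_semiring_1 mpoly)"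
  shows "\<exists>s<BB. \<exists>t<n. labf l u v = (XX (pii s l) t :: 'a mpoly) \<and> l < d \<and> u < wdf l \<and>
            (l = 0 \<or> u div n = s) \<and> (Suc l = d \<or> v div n = s)"
proof -
  have r: "l < d" "u < wdf l" "v < wdf (Suc l)" and c: "labf l u v = (core l u v :: 'a mpoly)"
    using assms(2) by (auto simp: labf_def split: if_splits)
  define s where "s = (if l = 0 then v div n else u div n)"
  have s0: "l = 0 \<or> u div n = s" by (simp add: s_def)
  have sB: "s < BB"
  proof (cases "l = 0")
    case True
    show ?thesis
    proof (cases "Suc l = d")
      case True
      have "v < 1" using r(3) True unfolding wdf_def by simp
      then show ?thesis using \<open>l = 0\<close> BB_pos by (simp add: s_def)
    next
      case False then show ?thesis using r \<open>l = 0\<close> by (simp add: s_def wdf_def less_mult_imp_div_less)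
    qed
  next
    case False
    then show ?thesis using r by (simp add: s_def wdf_def less_mult_imp_div_less)
  qed
  have cs: "core l u v = (if l < 2*kk then
       (if even l then (if u = hub l s \<and> v div n = s then XX (l div 2) (v mod n) else 0)
        else (if v = hub (Suc l) s then XX (kk + (l div 2 + s) mod kk) (u mod n) else 0))
     else (if u = hub l s \<and> v = hub (Suc l) s then XX l (sel s l) else (0::'a mpoly)))"
    unfolding core_def s_def Let_def by simp
  show ?thesis
  proof (cases "l < 2*kk")
    case True
    then have kf: "2 \<le> n" "3*kk \<le> d" using kk_facts by auto
    show ?thesis
    proof (cases "even l")
      case True
      then have "u = hub l s \<and> v div n = s" "labf l u v = (XX (pii s l) (v mod n) :: 'a mpoly)"
        using assms(2) c cs \<open>l < 2*kk\<close> by (auto simp: pii_def split: if_splits)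
      moreover have "v mod n < n" using assms(1) by simp
      ultimately show ?thesis using sB s0 r by blast
    next
      case False
      then have "v = hub (Suc l) s" "labf l u v = (XX (pii s l) (u mod n) :: 'a mpoly)"
        using assms(2) c cs \<open>l < 2*kk\<close> by (auto simp: pii_def split: if_splits)
      moreover have "hub (Suc l) s = s*n" using \<open>l < 2*kk\<close> kf by (simp add: hub_def)
      moreover have "u mod n < n" using assms(1) by simp
      moreover have "v div n = s" using calculation(1,3) assms(1) by simp
      ultimately show ?thesis using sB s0 r by blast
    qed
  next
    case False
    then have h: "u = hub l s \<and> v = hub (Suc l) s" "labf l u v = (XX (pii s l) (sel s l) :: 'a mpoly)"
      using assms(2) c cs by (auto simp: pii_def split: if_splits)
    have "sel s l < n"
    proof (cases "sel s l = 0")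
      case False
      then have "0 < kk" by (simp add: sel_def split: if_splits)
      then show ?thesis using kk_facts False by (simp add: sel_def split: if_splits)
    qed (use assms(1) in simp)
    moreover have "Suc l = d \<or> v div n = s" using h(1) assms(1) by (auto simp: hub_def)
    ultimately show ?thesis using sB s0 r h(2) by blast
  qed
qed

lemma sm_zero[simp]: "set_multilinear X S 0" by (simp add: set_multilinear_def)

lemma sm_sum: "(\<And>i. i \<in> I \<Longrightarrow> set_multilinear X S (f i)) \<Longrightarrow> set_multilinear X S (sum f I)"
proof -
  assume a: "\<And>i. i \<in> I \<Longrightarrow> set_multilinear X S (f i)"
  show ?thesis unfolding set_multilinear_def
  proof
    fix m assume "m \<in> Poly_Mapping.keys (sum f I)"
    then obtain i where "i \<in> I" "m \<in> Poly_Mapping.keys (f i)" using keys_sum[of f I] by blast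
    then show "(\<forall>x\<in>Poly_Mapping.keys m. \<exists>i\<in>S. x \<in> X i) \<and> (\<forall>i\<in>S. (\<Sum>x\<in>X i. Poly_Mapping.lookup m x) = 1)"
      using a unfolding set_multilinear_def by blast
  qed
qed

lemma sm_step:
  assumes "set_multilinear (Xp n) S f" "j \<notin> S" "t < n"
  shows "set_multilinear (Xp n) (insert j S) (f * (XX j t :: 'a::comm_semiring_1 mpoly))"
  unfolding set_multilinear_def
proof
  fix m assume "m \<in> Poly_Mapping.keys (f * XX j t)"
  then obtain a where a: "a \<in> Poly_Mapping.keys f" and m: "m = a + xv j t"
    using keys_mult[of f "XX j t"] by auto
  have sa: "(\<forall>x\<in>Poly_Mapping.keys a. \<exists>i\<in>S. x \<in> Xp n i) \<and> (\<forall>i\<in>S. (\<Sum>x\<in>Xp n i. Poly_Mapping.lookup a x) = 1)"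
    using assms(1) a by (simp add: set_multilinear_def)
  have kx: "Poly_Mapping.keys (xv j t) = {vr j t}" by (simp add: xv_def)
  have p1: "\<forall>x\<in>Poly_Mapping.keys m. \<exists>i\<in>insert j S. x \<in> Xp n i"
    using keys_add[of a "xv j t"] sa kx assms(3) unfolding m by auto
  have sx: "(\<Sum>x\<in>Xp n i. Poly_Mapping.lookup (xv j t) x) = (if i = j then 1 else 0)" for i
  proof -
    have "(\<Sum>x\<in>Xp n i. Poly_Mapping.lookup (xv j t) x) = (\<Sum>x\<in>Xp n i. if vr j t = x then 1 else 0)"
      by (simp add: xv_def lookup_single when_def)
    also have "\<dots> = (if vr j t \<in> Xp n i then 1 else 0)" by simp
    finally show ?thesis using assms(3) by auto
  qed
  have a0: "(\<Sum>x\<in>Xp n j. Poly_Mapping.lookup a x) = 0"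
  proof (rule sum.neutral, rule ballI)
    fix x assume x: "x \<in> Xp n j"
    show "Poly_Mapping.lookup a x = 0"
    proof (rule ccontr)
      assume "Poly_Mapping.lookup a x \<noteq> 0"
      then have "x \<in> Poly_Mapping.keys a" by (simp add: in_keys_iff)
      then obtain i where "i \<in> S" "x \<in> Xp n i" using sa by blast
      then show False using x assms(2) Xp_disj[of i j n] by auto
    qed
  qed
  have p2: "\<forall>i\<in>insert j S. (\<Sum>x\<in>Xp n i. Poly_Mapping.lookup m x) = 1"
  proof
    fix i assume i: "i \<in> insert j S"
    have "(\<Sum>x\<in>Xp n i. Poly_Mapping.lookup m x) =
          (\<Sum>x\<in>Xp n i. Poly_Mapping.lookup a x) + (\<Sum>x\<in>Xp n i. Poly_Mapping.lookup (xv j t) x)"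
      unfolding m by (simp add: lookup_add sum.distrib)
    then show "(\<Sum>x\<in>Xp n i. Poly_Mapping.lookup m x) = 1"
      using i sx a0 sa assms(2) by (cases "i = j") auto
  qed
  show "(\<forall>x\<in>Poly_Mapping.keys m. \<exists>i\<in>insert j S. x \<in> Xp n i) \<and>
        (\<forall>i\<in>insert j S. (\<Sum>x\<in>Xp n i. Poly_Mapping.lookup m x) = 1)"
    using p1 p2 by blast
qed

definition "SS l v = (if l = d then {..<d} else pii (v div n) ` {..<l})"

lemma node_sm:
  assumes "1 \<le> n"
  shows "l \<le> d \<Longrightarrow> v < wdf l \<Longrightarrow> set_multilinear (Xp n) (SS l v) (node_poly (ABPc :: 'a::comm_semiring_1 abp) l v)"
proof (induction l arbitrary: v)
  case 0
  have "SS 0 v = {}" by (simp add: SS_def)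
  then show ?case by (simp add: set_multilinear_def)
next
  case (Suc l)
  show ?case
  proof (simp only: node_poly.simps wd_ABPc lab_ABPc, rule sm_sum)
    fix u assume u: "u \<in> {..<wdf l}"
    show "set_multilinear (Xp n) (SS (Suc l) v) (node_poly (ABPc :: 'a abp) l u * labf l u v)"
    proof (cases "labf l u v = (0::'a mpoly)")
      case False
      from lab_char[OF assms False] obtain s t where st: "s < BB" "t < n"
        "labf l u v = (XX (pii s l) t :: 'a mpoly)" "l < d" "l = 0 \<or> u div n = s" "Suc l = d \<or> v div n = s"
        by blast
      have "SS l u = pii s ` {..<l}" using st by (auto simp: SS_def)
      moreover have "set_multilinear (Xp n) (SS l u) (node_poly (ABPc :: 'a abp) l u)"
        using Suc.IH[of u] Suc.prems u by simp
      ultimately have ih: "set_multilinear (Xp n) (pii s ` {..<l}) (node_poly (ABPc :: 'a abp) l u)"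
        by simp
      have nin: "pii s l \<notin> pii s ` {..<l}"
      proof
        assume "pii s l \<in> pii s ` {..<l}"
        then obtain x where "x < l" "pii s l = pii s x" by auto
        then show False using pii_inj[of s] st(4) unfolding inj_on_def
          by (metis lessThan_iff order.strict_trans less_irrefl)
      qed
      have "set_multilinear (Xp n) (insert (pii s l) (pii s ` {..<l})) (node_poly (ABPc :: 'a abp) l u * XX (pii s l) t)"
        by (rule sm_step[OF ih nin st(2)])
      moreover have "insert (pii s l) (pii s ` {..<l}) = SS (Suc l) v"
      proof (cases "Suc l = d")
        case True
        have "insert (pii s l) (pii s ` {..<l}) = pii s ` {..<Suc l}" by (simp add: lessThan_Suc)
        also have "\<dots> = pii s ` {..<d}" using True by simp
        also have "\<dots> = {..<d}" by (rule pii_surj)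
        finally show ?thesis using True by (simp add: SS_def)
      next
        case False
        then have "v div n = s" using st(6) by simp
        then show ?thesis using False by (simp add: SS_def lessThan_Suc)
      qed
      ultimately show ?thesis using st(3) by simp
    qed simp
  qed
qed

lemma ABPc_wf: "1 \<le> n \<Longrightarrow> abp_wf (ABPc :: 'a::comm_semiring_1 abp)"
proof -
  assume n: "1 \<le> n"
  have lp: "linear_poly (labf l u v :: 'a mpoly)" for l u v
  proof (cases "labf l u v = (0::'a mpoly)")
    case False
    then obtain s t where "labf l u v = (XX (pii s l) t :: 'a mpoly)" using lab_char[OF n] by blast
    then show ?thesis by (simp add: linear_poly_def mdeg_def xv_def)
  qed (simp add: linear_poly_def)
  then show ?thesis by (auto simp: abp_wf_def wdf_def labf_def)
qed

lemma ABPc_sm: "1 \<le> n \<Longrightarrow> sm_abp (Xp n) d (ABPc :: 'a::comm_semiring_1 abp)"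
proof -
  assume n: "1 \<le> n"
  have "SS l v \<subseteq> {..<d}" if "l \<le> d" for l v
    using pii_lt that by (auto simp: SS_def)
  then have "\<forall>l\<le>d. \<forall>v<wdf l. \<exists>S\<subseteq>{..<d}. set_multilinear (Xp n) S (node_poly (ABPc :: 'a abp) l v)"
    using node_sm[OF n] by blast
  then show ?thesis using ABPc_wf[OF n] unfolding sm_abp_def by simp
qed

lemma ABPc_size: "1 \<le> n \<Longrightarrow> 1 \<le> d \<Longrightarrow> abp_size (ABPc :: 'a::comm_semiring_1 abp) \<le> 3 * (n + d) ^ 3"
proof -
  assume n: "1 \<le> n" and d: "1 \<le> d"
  have "BB \<le> d" using d by (auto simp: BB_def kk_def)
  then have "BB * n \<le> d * n" by simp
  then have w: "wdf l \<le> d * n" for l using n d by (auto simp: wdf_def)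
  have "abp_size (ABPc :: 'a abp) = (\<Sum>l\<le>d. wdf l)" by (simp add: abp_size_def)
  also have "\<dots> \<le> of_nat (card {..d}) * (d * n)" by (rule sum_bounded_above) (use w in auto)
  also have "\<dots> = (d + 1) * d * n" by (simp add: algebra_simps)
  also have "\<dots> \<le> (n + d) * (n + d) * (n + d)" using n by (intro mult_mono) auto
  also have "\<dots> \<le> 3 * (n + d) ^ 3" by (simp add: power3_eq_cube)
  finally show ?thesis .
qed

lemma sum_delta_conj: "finite A \<Longrightarrow> (\<Sum>j\<in>A. if j = p \<and> Q j then (1::nat) else 0) = (if p \<in> A \<and> Q p then 1 else 0)"
proof -
  assume f: "finite A"
  have "(\<Sum>j\<in>A. if j = p \<and> Q j then (1::nat) else 0) = (\<Sum>j\<in>A. if j = p then (if Q p then 1 else 0) else 0)"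
    by (intro sum.cong) auto
  then show ?thesis using f by simp
qed

lemma lookup_Full: "Poly_Mapping.lookup (Full s \<tau>) (vr p t) =
   (\<Sum>j<kk. (if j = p \<and> \<tau> j = t then 1 else 0) + (if kk + (j + s) mod kk = p \<and> \<tau> j = t then 1 else 0))
   + (\<Sum>j\<in>{2*kk..<d}. if j = p \<and> sel s j = t then 1 else 0)"
  by (simp add: Full_def Hm_def Tl_def lookup_add lookup_sum lookup_xv)

lemma LF_L: assumes "0 < kk" "i < kk"
  shows "Poly_Mapping.lookup (Full s \<tau>) (vr i t) = (if \<tau> i = t then 1 else 0)"
proof -
  have "(\<Sum>j<kk. (if j = i \<and> \<tau> j = t then 1 else 0) + (if kk + (j + s) mod kk = i \<and> \<tau> j = t then 1 else (0::nat)))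
        = (\<Sum>j<kk. if j = i \<and> \<tau> j = t then 1 else 0)"
    using assms by (intro sum.cong) auto
  also have "\<dots> = (if \<tau> i = t then 1 else 0)" using assms by (simp add: sum_delta_conj)
  finally show ?thesis using assms unfolding lookup_Full by (simp add: sum_delta_conj)
qed

lemma LF_R: assumes "0 < kk" "i < kk"
  shows "Poly_Mapping.lookup (Full s \<tau>) (vr (kk + (i + s) mod kk) t) = (if \<tau> i = t then 1 else 0)"
proof -
  have m: "(i + s) mod kk < kk" using assms by simp
  have "(\<Sum>j<kk. (if j = kk + (i + s) mod kk \<and> \<tau> j = t then 1 else 0) + (if kk + (j + s) mod kk = kk + (i + s) mod kk \<and> \<tau> j = t then 1 else (0::nat)))
        = (\<Sum>j<kk. if j = i \<and> \<tau> j = t then 1 else 0)"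
  proof (intro sum.cong refl)
    fix j assume j: "j \<in> {..<kk}"
    have "kk + (j + s) mod kk = kk + (i + s) mod kk \<longleftrightarrow> j = i" using mod_cancel[of j kk i s] j assms by auto
    then show "(if j = kk + (i + s) mod kk \<and> \<tau> j = t then 1 else 0) + (if kk + (j + s) mod kk = kk + (i + s) mod kk \<and> \<tau> j = t then 1 else (0::nat))
       = (if j = i \<and> \<tau> j = t then 1 else 0)" using j by auto
  qed
  also have "\<dots> = (if \<tau> i = t then 1 else 0)" using assms by (simp add: sum_delta_conj)
  moreover have "kk + (i + s) mod kk < 2*kk" using m by linarith
  then have "(\<Sum>j\<in>{2*kk..<d}. if j = kk + (i + s) mod kk \<and> sel s j = t then 1 else (0::nat)) = 0"
    by (intro sum.neutral) auto
  ultimately show ?thesis unfolding lookup_Full by simp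
qed

lemma LF_S: assumes "0 < kk" "j0 < kk"
  shows "Poly_Mapping.lookup (Full s \<tau>) (vr (2*kk + j0) t) = (if t = (if j0 = s then 1 else 0) then 1 else 0)"
proof -
  have kd: "3*kk \<le> d" using kk_facts assms by auto
  have "(\<Sum>j<kk. (if j = 2*kk + j0 \<and> \<tau> j = t then 1 else 0) + (if kk + (j + s) mod kk = 2*kk + j0 \<and> \<tau> j = t then 1 else (0::nat))) = 0"
  proof (intro sum.neutral ballI)
    fix j assume "j \<in> {..<kk}"
    have "(j + s) mod kk < kk" using assms by simp
    then have "kk + (j + s) mod kk \<noteq> 2*kk + j0" by linarith
    moreover have "j \<noteq> 2*kk + j0" using \<open>j \<in> {..<kk}\<close> by simp
    ultimately show "(if j = 2*kk + j0 \<and> \<tau> j = t then 1 else 0) + (if kk + (j + s) mod kk = 2*kk + j0 \<and> \<tau> j = t then 1 else (0::nat)) = 0"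
      by simp
  qed
  moreover have "sel s (2*kk + j0) = (if j0 = s then 1 else 0)" using assms by (simp add: sel_def)
  moreover have "2*kk + j0 \<in> {2*kk..<d}" using kd assms by simp
  ultimately show ?thesis unfolding lookup_Full by (simp add: sum_delta_conj)
qed

lemma keys_Full:
  assumes "0 < kk" "\<tau> \<in> Pi\<^sub>E {..<kk} (\<lambda>_. {..<n})"
  shows "Poly_Mapping.keys (Full s \<tau>) \<subseteq> (\<Union>i<d. Xp n i)"
proof -
  let ?U = "(\<Union>i<d. Xp n i)"
  have kf: "2 \<le> n" "3*kk \<le> d" using kk_facts assms by auto
  have xvU: "Poly_Mapping.keys (xv i t) \<subseteq> ?U" if "i < d" "t < n" for i t
    using that by (auto simp: xv_def)
  have addU: "Poly_Mapping.keys (a + b) \<subseteq> ?U" if "Poly_Mapping.keys a \<subseteq> ?U" "Poly_Mapping.keys b \<subseteq> ?U" for a b :: "nat \<Rightarrow>\<^sub>0 nat"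
    using keys_add[of a b] that by auto
  have sumU: "Poly_Mapping.keys (sum f A) \<subseteq> ?U" if "\<And>j. j \<in> A \<Longrightarrow> Poly_Mapping.keys (f j) \<subseteq> ?U" for f :: "nat \<Rightarrow> nat \<Rightarrow>\<^sub>0 nat" and A
    using keys_sum[of f A] that by blast
  have h: "Poly_Mapping.keys (Hm s \<tau> kk) \<subseteq> ?U" unfolding Hm_def
  proof (rule sumU, rule addU)
    fix j assume j: "j \<in> {..<kk}"
    then have t: "\<tau> j < n" using assms(2) by auto
    show "Poly_Mapping.keys (xv j (\<tau> j)) \<subseteq> ?U" using j t kf by (intro xvU) auto
    have "(j + s) mod kk < kk" using assms by simp
    then show "Poly_Mapping.keys (xv (kk + (j + s) mod kk) (\<tau> j)) \<subseteq> ?U" using t kf by (intro xvU) auto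
  qed
  have "Poly_Mapping.keys (Tl s d) \<subseteq> ?U" unfolding Tl_def
  proof (rule sumU)
    fix j assume j: "j \<in> {2*kk..<d}"
    have "sel s j < n" using kf by (simp add: sel_def)
    then show "Poly_Mapping.keys (xv j (sel s j)) \<subseteq> ?U" using j by (intro xvU) auto
  qed
  then show ?thesis unfolding Full_def using h addU by blast
qed

definition rs :: "nat set \<Rightarrow> (nat \<Rightarrow>\<^sub>0 nat) \<Rightarrow> (nat \<Rightarrow>\<^sub>0 nat)" where
  "rs V m = Abs_poly_mapping (\<lambda>x. if x \<in> V then Poly_Mapping.lookup m x else 0)"

lemma fin_rs: "finite {x. (if x \<in> V then Poly_Mapping.lookup m x else (0::nat)) \<noteq> 0}"
proof -
  have "{x. (if x \<in> V then Poly_Mapping.lookup m x else 0) \<noteq> 0} \<subseteq> Poly_Mapping.keys m"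
  proof
    fix x assume "x \<in> {x. (if x \<in> V then Poly_Mapping.lookup m x else 0) \<noteq> 0}"
    then have "Poly_Mapping.lookup m x \<noteq> 0" by (cases "x \<in> V") auto
    then show "x \<in> Poly_Mapping.keys m" by (metis in_keys_iff)
  qed
  then show ?thesis by (rule finite_subset) simp
qed

lemma lookup_rs: "Poly_Mapping.lookup (rs V m) x = (if x \<in> V then Poly_Mapping.lookup m x else 0)"
  unfolding rs_def lookup_Abs_poly_mapping[OF fin_rs] by (rule refl)

lemma keys_rs: "Poly_Mapping.keys (rs V m) \<subseteq> V"
proof
  fix x assume "x \<in> Poly_Mapping.keys (rs V m)"
  then have "Poly_Mapping.lookup (rs V m) x \<noteq> 0" by (metis in_keys_iff)
  then show "x \<in> V" unfolding lookup_rs by (cases "x \<in> V") auto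
qed

lemma lower_main:
  fixes A :: "'a::field abp"
  assumes n2: "2 \<le> n" and d3: "3 \<le> d" and ord: "ordered_sm_abp (Xp n) d A"
    and comp: "abp_computes A (Gexp :: 'a mpoly)"
  shows "\<exists>c. kk \<le> 2 * c \<and> n ^ c \<le> abp_width A"
proof -
  have kdef: "kk = d div 3" using n2 by (simp add: kk_def)
  have kpos: "0 < kk" using d3 kdef by simp
  have kd: "3*kk \<le> d" using kdef by simp
  have BBk: "BB = kk" using kpos by (simp add: BB_def)
  obtain \<sigma> where wf: "abp_wf A" and dep: "depth A = d" and \<sigma>: "\<sigma> permutes {..<d}"
    and lf: "\<forall>l<d. \<forall>u v. linear_form_in (Xp n (\<sigma> l)) (lab A l u v)"
    using ord unfolding ordered_sm_abp_def sm_abp_def by blast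
  have \<sigma>im: "\<sigma> ` {..<d} = {..<d}" using permutes_image[OF \<sigma>] .
  have \<sigma>inj: "inj \<sigma>" using permutes_inj[OF \<sigma>] .
  define f where "f l = card (\<sigma> ` {..<l} \<inter> {..<2*kk})" for l
  have f0: "f 0 = 0" by (simp add: f_def)
  have fS: "f (Suc l) \<le> f l + 1" for l
  proof -
    have "\<sigma> ` {..<Suc l} \<inter> {..<2*kk} \<subseteq> insert (\<sigma> l) (\<sigma> ` {..<l} \<inter> {..<2*kk})"
      by (auto simp: lessThan_Suc)
    then have "f (Suc l) \<le> card (insert (\<sigma> l) (\<sigma> ` {..<l} \<inter> {..<2*kk}))"
      unfolding f_def by (intro card_mono) auto
    also have "\<dots> \<le> f l + 1" unfolding f_def by (simp add: card_insert_le_m1)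
    finally show ?thesis .
  qed
  have fd: "f d = 2*kk" using \<sigma>im kd by (simp add: f_def Int_absorb1)
  obtain l where l: "l \<le> d" "f l = kk"
    using discrete_ivt[of f, OF f0 fS, of kk d] fd by auto
  define P where "P = \<sigma> ` {..<l}"
  have cP: "card (P \<inter> {..<2*kk}) = kk" using l by (simp add: P_def f_def)
  obtain s where s: "s < kk" and sC: "kk \<le> 2 * card {i\<in>{..<kk}. (i \<in> P) \<noteq> (kk + (i + s) mod kk \<in> P)}"
    using cross_exists[OF kpos cP] by blast
  define C where "C = {i\<in>{..<kk}. (i \<in> P) \<noteq> (kk + (i + s) mod kk \<in> P)}"
  define VP where "VP = (\<Union>i<l. Xp n (\<sigma> i))"
  define VQ where "VQ = (\<Union>i\<in>{l..<l+(d-l)}. Xp n (\<sigma> i))"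
  have memP: "vr j t \<in> VP \<longleftrightarrow> j \<in> P \<and> t < n" for j t
    by (auto simp: VP_def P_def)
  have ldl: "l + (d - l) = d" using l(1) by simp
  have memQ: "vr j t \<in> VQ \<longleftrightarrow> j \<notin> P \<and> t < n" if "j < d" for j t
  proof -
    have "j \<in> \<sigma> ` {..<d}" using \<sigma>im that by simp
    then obtain i0 where i0: "i0 < d" "j = \<sigma> i0" by auto
    have e: "\<sigma> i = \<sigma> i0 \<longleftrightarrow> i = i0" for i using \<sigma>inj by (simp add: inj_eq)
    have "j \<in> P \<longleftrightarrow> i0 < l"
    proof
      assume "j \<in> P"
      then obtain i where "i < l" "j = \<sigma> i" by (auto simp: P_def)
      then show "i0 < l" using e i0 by metis
    next
      assume "i0 < l" then show "j \<in> P" using i0 by (auto simp: P_def)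
    qed
    moreover have "vr j t \<in> VQ \<longleftrightarrow> (\<exists>i\<in>{l..<d}. j = \<sigma> i) \<and> t < n"
      unfolding VQ_def ldl by auto
    moreover have "(\<exists>i\<in>{l..<d}. j = \<sigma> i) \<longleftrightarrow> l \<le> i0"
    proof
      assume "\<exists>i\<in>{l..<d}. j = \<sigma> i"
      then obtain i where "i \<in> {l..<d}" "j = \<sigma> i" by blast
      then show "l \<le> i0" using e i0 by (metis atLeastLessThan_iff)
    next
      assume "l \<le> i0" then show "\<exists>i\<in>{l..<d}. j = \<sigma> i" using i0 by auto
    qed
    ultimately show ?thesis by auto
  qed
  have disj: "VP \<inter> VQ = {}"
  proof (rule ccontr)
    assume "VP \<inter> VQ \<noteq> {}"
    then obtain x i i' where "i < l" "i' \<in> {l..<l+(d-l)}" "x \<in> Xp n (\<sigma> i)" "x \<in> Xp n (\<sigma> i')"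
      unfolding VP_def VQ_def by blast
    moreover have "\<sigma> i \<noteq> \<sigma> i'" using calculation \<sigma>inj by (auto simp: inj_eq)
    ultimately show False using Xp_disj by blast
  qed
  have cover: "(\<Union>i<d. Xp n i) \<subseteq> VP \<union> VQ"
  proof
    fix x assume "x \<in> (\<Union>i<d. Xp n i)"
    then obtain j t where "j < d" "t < n" "x = vr j t" by (auto simp: Xp_def)
    then show "x \<in> VP \<union> VQ" using memP memQ by blast
  qed
  define T where "T = Pi\<^sub>E C (\<lambda>_. {..<n})"
  define \<tau> where "\<tau> a = restrict (\<lambda>i. if i \<in> C then a i else 0) {..<kk}" for a :: "nat \<Rightarrow> nat"
  have \<tau>P: "\<tau> a \<in> Pi\<^sub>E {..<kk} (\<lambda>_. {..<n})" if "a \<in> T" for a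
    using that n2 by (auto simp: \<tau>_def T_def)
  define r where "r a = rs VP (Full s (\<tau> a))" for a
  define cc where "cc b = rs VQ (Full s (\<tau> b))" for b
  have lk: "Poly_Mapping.lookup (r a + cc b) x =
      (if x \<in> VP then Poly_Mapping.lookup (Full s (\<tau> a)) x
       else if x \<in> VQ then Poly_Mapping.lookup (Full s (\<tau> b)) x else 0)" for a b x
    using disj by (auto simp: r_def cc_def lookup_add lookup_rs)
  have claimE: "s' = s \<and> \<tau>' = \<tau> a \<and> a = b"
    if th: "s' < kk" "\<tau>' \<in> Pi\<^sub>E {..<kk} (\<lambda>_. {..<n})" "Full s' \<tau>' = r a + cc b" "a \<in> T" "b \<in> T"
    for s' \<tau>' a b
  proof -
    have L: "Poly_Mapping.lookup (Full s' \<tau>') x =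
      (if x \<in> VP then Poly_Mapping.lookup (Full s (\<tau> a)) x
       else if x \<in> VQ then Poly_Mapping.lookup (Full s (\<tau> b)) x else 0)" for x
      using th(3) lk by simp
    have G1: "Poly_Mapping.lookup (Full s' \<tau>') x = Poly_Mapping.lookup (Full s (\<tau> a)) x" if "x \<in> VP" for x
      using L[of x] that by simp
    have G2: "Poly_Mapping.lookup (Full s' \<tau>') x = Poly_Mapping.lookup (Full s (\<tau> b)) x" if "x \<notin> VP" "x \<in> VQ" for x
      using L[of x] that by simp
    have ss: "s' = s"
    proof -
      let ?x = "vr (2*kk + s') 1"
      have j: "2*kk + s' < d" using th(1) kd by linarith
      have one: "Poly_Mapping.lookup (Full s' \<tau>') ?x = 1"
        using LF_S[OF kpos th(1), of s' \<tau>' 1] by simp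
      have o2: "Poly_Mapping.lookup (Full s (\<tau> e)) ?x = (if s' = s then 1 else 0)" for e
        using LF_S[OF kpos th(1), of s "\<tau> e" 1] by simp
      have mem: "?x \<in> VP \<or> ?x \<in> VQ" using memP memQ[OF j] n2 by auto
      have "1 = (if s' = s then (1::nat) else 0)"
      proof (cases "?x \<in> VP")
        case True then show ?thesis using G1[OF True] one o2[of a] by simp
      next
        case False then have "?x \<in> VQ" using mem by blast
        then show ?thesis using G2[OF False] one o2[of b] by simp
      qed
      then show "s' = s" by (cases "s' = s") auto
    qed
    have key: "((i \<in> P \<or> kk + (i + s) mod kk \<in> P) \<longrightarrow> \<tau> a i = \<tau>' i) \<and>
               ((i \<notin> P \<or> kk + (i + s) mod kk \<notin> P) \<longrightarrow> \<tau> b i = \<tau>' i)" if i: "i < kk" for i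
    proof -
      define t where "t = \<tau>' i"
      have tn: "t < n" using th(2) i by (auto simp: t_def)
      have "(i + s) mod kk < kk" using kpos by simp
      then have id: "i < d" "kk + (i + s) mod kk < d" using i kd by linarith+
      have A1: "Poly_Mapping.lookup (Full s' \<tau>') (vr i t) = 1" using LF_L[OF kpos i] by (simp add: t_def)
      have A2: "Poly_Mapping.lookup (Full s' \<tau>') (vr (kk + (i + s) mod kk) t) = 1"
        using LF_R[OF kpos i, of s' \<tau>' t] ss by (simp add: t_def)
      have B1: "Poly_Mapping.lookup (Full s (\<tau> e)) (vr i t) = (if \<tau> e i = t then 1 else 0)" for e
        using LF_L[OF kpos i] .
      have B2: "Poly_Mapping.lookup (Full s (\<tau> e)) (vr (kk + (i + s) mod kk) t) = (if \<tau> e i = t then 1 else 0)" for e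
        using LF_R[OF kpos i] .
      have one: "\<tau> e i = t" if "(if \<tau> e i = t then 1 else 0) = (1::nat)" for e
        using that by (cases "\<tau> e i = t") auto
      have c1: "\<tau> a i = t" if "i \<in> P"
      proof (rule one)
        have m: "vr i t \<in> VP" using memP that tn by simp
        show "(if \<tau> a i = t then 1 else 0) = (1::nat)"
          by (simp only: B1[of a, symmetric] G1[OF m, symmetric] A1)
      qed
      have c2: "\<tau> b i = t" if "i \<notin> P"
      proof (rule one)
        have m: "vr i t \<notin> VP" "vr i t \<in> VQ" using memP memQ[OF id(1)] that tn by simp_all
        show "(if \<tau> b i = t then 1 else 0) = (1::nat)"
          by (simp only: B1[of b, symmetric] G2[OF m, symmetric] A1)
      qed
      have c3: "\<tau> a i = t" if "kk + (i + s) mod kk \<in> P"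
      proof (rule one)
        have m: "vr (kk + (i + s) mod kk) t \<in> VP" using memP that tn by simp
        show "(if \<tau> a i = t then 1 else 0) = (1::nat)"
          by (simp only: B2[of a, symmetric] G1[OF m, symmetric] A2)
      qed
      have c4: "\<tau> b i = t" if "kk + (i + s) mod kk \<notin> P"
      proof (rule one)
        have m: "vr (kk + (i + s) mod kk) t \<notin> VP" "vr (kk + (i + s) mod kk) t \<in> VQ"
          using memP memQ[OF id(2)] that tn by simp_all
        show "(if \<tau> b i = t then 1 else 0) = (1::nat)"
          by (simp only: B2[of b, symmetric] G2[OF m, symmetric] A2)
      qed
      show ?thesis using c1 c2 c3 c4 by (auto simp: t_def)
    qed
    have t1: "\<tau>' = \<tau> a"
    proof (rule PiE_ext[OF th(2) \<tau>P[OF th(4)]])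
      fix i assume i: "i \<in> {..<kk}"
      show "\<tau>' i = \<tau> a i"
      proof (cases "i \<in> C")
        case True
        then show ?thesis using key[of i] i by (auto simp: C_def)
      next
        case False
        then have "\<tau> a i = 0" "\<tau> b i = 0" using i by (auto simp: \<tau>_def)
        then show ?thesis using key[of i] i by auto
      qed
    qed
    have t2: "a = b"
    proof (rule PiE_ext[of a C "\<lambda>_. {..<n}" b])
      show "a \<in> Pi\<^sub>E C (\<lambda>_. {..<n})" "b \<in> Pi\<^sub>E C (\<lambda>_. {..<n})" using th(4,5) by (auto simp: T_def)
      fix i assume i: "i \<in> C"
      then have ik: "i < kk" by (simp add: C_def)
      have "\<tau> a i = a i" "\<tau> b i = b i" using i ik by (auto simp: \<tau>_def)
      then show "a i = b i" using key[OF ik] i by (auto simp: C_def)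
    qed
    show ?thesis using ss t1 t2 by simp
  qed
  have full_eq: "r a + cc a = Full s (\<tau> a)" if "a \<in> T" for a
  proof (rule poly_mapping_eqI)
    fix x
    show "Poly_Mapping.lookup (r a + cc a) x = Poly_Mapping.lookup (Full s (\<tau> a)) x"
    proof (cases "x \<in> VP \<or> x \<in> VQ")
      case True then show ?thesis using lk[of a a x] by auto
    next
      case False
      then have "x \<notin> Poly_Mapping.keys (Full s (\<tau> a))" using keys_Full[OF kpos \<tau>P[OF that]] cover by blast
      then have "Poly_Mapping.lookup (Full s (\<tau> a)) x = 0" by (metis in_keys_iff)
      then show ?thesis using lk[of a a x] False by simp
    qed
  qed
  have entry: "Poly_Mapping.lookup (Gexp :: 'a mpoly) (r a + cc b) = (if a = b then 1 else 0)"
    if ab: "a \<in> T" "b \<in> T" for a b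
  proof -
    have "Poly_Mapping.lookup (Gexp :: 'a mpoly) (r a + cc b) =
       (\<Sum>s'<kk. \<Sum>\<tau>'\<in>Pi\<^sub>E {..<kk} (\<lambda>_. {..<n}). if Full s' \<tau>' = r a + cc b then 1 else 0)"
      by (simp add: Gexp_def BBk lookup_sum lookup_single when_def)
    also have "\<dots> = (\<Sum>s'<kk. \<Sum>\<tau>'\<in>Pi\<^sub>E {..<kk} (\<lambda>_. {..<n}).
                      if a = b \<and> s' = s \<and> \<tau>' = \<tau> a then 1 else 0)"
    proof (intro sum.cong refl)
      fix s' \<tau>' assume h: "s' \<in> {..<kk}" "\<tau>' \<in> Pi\<^sub>E {..<kk} (\<lambda>_. {..<n})"
      have "Full s' \<tau>' = r a + cc b \<longleftrightarrow> a = b \<and> s' = s \<and> \<tau>' = \<tau> a"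
      proof
        assume "Full s' \<tau>' = r a + cc b"
        then show "a = b \<and> s' = s \<and> \<tau>' = \<tau> a" using claimE[of s' \<tau>' a b] h ab by blast
      next
        assume "a = b \<and> s' = s \<and> \<tau>' = \<tau> a"
        then show "Full s' \<tau>' = r a + cc b" using full_eq[OF ab(1)] by simp
      qed
      then show "(if Full s' \<tau>' = r a + cc b then (1::'a) else 0) = (if a = b \<and> s' = s \<and> \<tau>' = \<tau> a then 1 else 0)"
        by simp
    qed
    also have "\<dots> = (if a = b then 1 else 0)"
    proof (cases "a = b")
      case True
      have "(\<Sum>s'<kk. \<Sum>\<tau>'\<in>Pi\<^sub>E {..<kk} (\<lambda>_. {..<n}). if s' = s \<and> \<tau>' = \<tau> a then (1::'a) else 0)
          = (\<Sum>s'<kk. if s' = s then (\<Sum>\<tau>'\<in>Pi\<^sub>E {..<kk} (\<lambda>_. {..<n}). if \<tau>' = \<tau> a then 1 else 0) else 0)"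
        by (intro sum.cong refl) auto
      also have "\<dots> = 1"
      proof -
        have "finite (Pi\<^sub>E {..<kk} (\<lambda>_. {..<n}))" by (simp add: finite_PiE)
        then show ?thesis using s \<tau>P[OF ab(1)] by simp
      qed
      finally show ?thesis using True by simp
    qed simp
    finally show ?thesis .
  qed
  have dec: "(Gexp :: 'a mpoly) = (\<Sum>u<wd A l. node_poly A l u * pp A l u (d-l) 0)"
    using decomp[OF wf, of l "d-l" 0] comp dep l(1) by (simp add: abp_computes_def)
  have vP: "vars_in VP (node_poly A l u)" for u
    unfolding VP_def by (rule node_vars[where X="Xp n" and \<sigma>=\<sigma> and d=d, OF lf l(1)])
  have vQ: "vars_in VQ (pp A l u (d-l) 0)" for u
    unfolding VQ_def by (rule pp_vars[where X="Xp n" and \<sigma>=\<sigma> and d=d, OF lf]) (use l in simp)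
  have M: "(\<Sum>u<wd A l. Poly_Mapping.lookup (node_poly A l u) (r a) * Poly_Mapping.lookup (pp A l u (d-l) 0) (cc b))
       = (if a = b then 1 else 0)" if "a \<in> T" "b \<in> T" for a b
  proof -
    have "Poly_Mapping.lookup (Gexp :: 'a mpoly) (r a + cc b) =
         (\<Sum>u<wd A l. Poly_Mapping.lookup (node_poly A l u * pp A l u (d-l) 0) (r a + cc b))"
      by (subst dec) (simp add: lookup_sum)
    also have "\<dots> = (\<Sum>u<wd A l. Poly_Mapping.lookup (node_poly A l u) (r a) * Poly_Mapping.lookup (pp A l u (d-l) 0) (cc b))"
      by (intro sum.cong refl lookup_mult_split[OF vP vQ disj]) (simp_all add: r_def cc_def keys_rs)
    finally show ?thesis using entry[OF that] by simp
  qed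
  have finT: "finite T" unfolding T_def by (simp add: C_def finite_PiE)
  have "card T \<le> wd A l"
    by (rule rank_bound[OF finT, where F="\<lambda>a u. Poly_Mapping.lookup (node_poly A l u) (r a)"
          and H="\<lambda>u b. Poly_Mapping.lookup (pp A l u (d-l) 0) (cc b)"]) (use M in auto)
  moreover have "card T = n ^ card C" unfolding T_def by (simp add: card_PiE C_def)
  moreover have "wd A l \<le> abp_width A"
    unfolding abp_width_def using l(1) dep by (intro Max_ge) auto
  ultimately show ?thesis using sC unfolding C_def[symmetric] by auto
qed

end



theorem theorem1p8:
  "\<exists>(G :: nat \<Rightarrow> nat \<Rightarrow> 'a::field mpoly) (X :: nat \<Rightarrow> nat \<Rightarrow> nat \<Rightarrow> nat set).
     (\<forall>n d. var_partition n d (X n d) \<and> set_multilinear (X n d) {..<d} (G n d)) \<and>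
     (\<exists>c::nat. \<forall>n d. 1 \<le> n \<longrightarrow> 1 \<le> d \<longrightarrow>
        (\<exists>A :: 'a abp. sm_abp (X n d) d A \<and> abp_computes A (G n d) \<and>
                      abp_size A \<le> c * (n + d) ^ c)) \<and>
     (\<exists>\<epsilon>::real. \<epsilon> > 0 \<and> (\<exists>N::nat. \<forall>n d. N \<le> n \<longrightarrow> N \<le> d \<longrightarrow>
        (\<forall>A :: 'a abp. ordered_sm_abp (X n d) d A \<longrightarrow> abp_computes A (G n d) \<longrightarrow>
            real (abp_width A) \<ge> real n powr (\<epsilon> * real d))))"
proof -
  define G :: "nat \<Rightarrow> nat \<Rightarrow> 'a mpoly" where "G n d = (if n = 0 then 0 else Gexp n d)" for n d
  define X :: "nat \<Rightarrow> nat \<Rightarrow> nat \<Rightarrow> nat set" where "X n d = Xp n" for n d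
  have P1: "var_partition n d (X n d) \<and> set_multilinear (X n d) {..<d} (G n d)" for n d
  proof
    show "var_partition n d (X n d)"
      unfolding var_partition_def X_def using Xp_disj by (auto simp: card_Xp)
    show "set_multilinear (X n d) {..<d} (G n d)"
    proof (cases "n = 0")
      case True then show ?thesis by (simp add: G_def)
    next
      case False
      then have n: "1 \<le> n" by simp
      have "set_multilinear (Xp n) (SS n d d 0) (node_poly (ABPc n d :: 'a abp) d 0)"
        by (rule node_sm[OF n]) (simp_all add: wdf_def)
      moreover have "node_poly (ABPc n d :: 'a abp) d 0 = Gexp n d" by (rule node_end[OF n])
      ultimately show ?thesis using False by (simp add: SS_def G_def X_def)
    qed
  qed
  have P2: "\<exists>A :: 'a abp. sm_abp (X n d) d A \<and> abp_computes A (G n d) \<and> abp_size A \<le> 3 * (n + d) ^ 3"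
    if n: "1 \<le> n" and d: "1 \<le> d" for n d
  proof (intro exI conjI)
    show "sm_abp (X n d) d (ABPc n d :: 'a abp)" unfolding X_def by (rule ABPc_sm[OF n])
    show "abp_computes (ABPc n d :: 'a abp) (G n d)"
    proof -
      have "node_poly (ABPc n d :: 'a abp) d 0 = Gexp n d" by (rule node_end[OF n])
      then show ?thesis using n by (simp add: abp_computes_def G_def)
    qed
    show "abp_size (ABPc n d :: 'a abp) \<le> 3 * (n + d) ^ 3" by (rule ABPc_size[OF n d])
  qed
  have P3: "real (abp_width A) \<ge> real n powr ((1/12) * real d)"
    if n: "6 \<le> n" and d: "6 \<le> d" and o: "ordered_sm_abp (X n d) d A" and c: "abp_computes A (G n d)"
    for n d and A :: "'a abp"
  proof -
    have cg: "abp_computes A (Gexp n d)" using c n by (simp add: G_def)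
    obtain c where c1: "kk n d \<le> 2 * c" and c2: "n ^ c \<le> abp_width A"
      using lower_main[of n d A] n d o cg by (auto simp: X_def)
    have kk: "kk n d = d div 3" using n by (simp add: kk_def)
    have "d \<le> 3 * (d div 3) + 2" by linarith
    then have "real d \<le> 3 * (2 * real c) + 2" using c1 kk by linarith
    then have le: "(1/12) * real d \<le> real c" using d by linarith
    have "real n powr ((1/12) * real d) \<le> real n powr (real c)"
      by (rule powr_mono[OF le]) (use n in simp)
    also have "\<dots> = real n ^ c" using n by (simp add: powr_realpow)
    also have "\<dots> = real (n ^ c)" by simp
    also have "\<dots> \<le> real (abp_width A)" using c2 by linarith
    finally show ?thesis .
  qed
  show ?thesis
  proof (intro exI[of _ G] exI[of _ X] conjI)
    show "\<forall>n d. var_partition n d (X n d) \<and> set_multilinear (X n d) {..<d} (G n d)" using P1 by blast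
    show "\<exists>c::nat. \<forall>n d. 1 \<le> n \<longrightarrow> 1 \<le> d \<longrightarrow>
        (\<exists>A :: 'a abp. sm_abp (X n d) d A \<and> abp_computes A (G n d) \<and> abp_size A \<le> c * (n + d) ^ c)"
      using P2 by (intro exI[of _ 3]) blast
    show "\<exists>\<epsilon>::real. \<epsilon> > 0 \<and> (\<exists>N::nat. \<forall>n d. N \<le> n \<longrightarrow> N \<le> d \<longrightarrow>
        (\<forall>A :: 'a abp. ordered_sm_abp (X n d) d A \<longrightarrow> abp_computes A (G n d) \<longrightarrow>
            real (abp_width A) \<ge> real n powr (\<epsilon> * real d)))"
      using P3 by (intro exI[of _ "1/12"] conjI exI[of _ 6]) auto
  qed
qed


end
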